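(* Let $T$ be a triangle which has no right angle and is not of type $(120^\circ,30^\circ,30^\circ)$. Then the 3-graph $K_4^{3-}$ with vertex set $[4]$ and edges $123,124,134$ is forbidden for $T$.
   Context: A 3-graph is a 3-uniform hypergraph; $G$ is $F$-free if it has no (not necessarily induced) subhypergraph isomorphic to $F$. A triangle is of type $(\alpha,\beta,\gamma)$ if $\alpha\ge\beta\ge\gamma$ are its interior angles in degrees. For a triangle $T$ with side lengths $a,b,c$ and $\varepsilon>0$, with $\varepsilon'=\varepsilon\min\{a,b,c\}$, a triangle $A'B'C'$ is $\varepsilon$-congruent to $T$ if there are $A,B,C\in\mathbb{R}^2$ with $ABC$ congruent to $T$ and $A',B',C'$ within distance $\varepsilon'$ of $A,B,C$ respectively. For finite $P\subseteq\mathbb{R}^2$, $\mathcal{H}(T,P,\varepsilon)$ is the 3-graph on $P$ whose edges are triples forming triangles $\varepsilon$-congruent to $T$. A 3-graph $H$ is forbidden for $T$ if there exists $\varepsilon>0$ such that for every $P\subseteq\mathbb{R}^2$ with $|P|=|V(H)|$, $\mathcal{H}(T,P,\varepsilon)$ is $H$-free. *)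

theory Defs
  imports "HOL-Analysis.Analysis"
begin

type_synonym pt = "real ^ 2"

definition ang :: "pt \<Rightarrow> pt \<Rightarrow> pt \<Rightarrow> real" where
  "ang p q r = arccos (((q - p) \<bullet> (r - p)) / (norm (q - p) * norm (r - p)))"

definition is_triangle :: "pt \<Rightarrow> pt \<Rightarrow> pt \<Rightarrow> bool" where
  "is_triangle t1 t2 t3 \<longleftrightarrow> \<not> collinear {t1, t2, t3}"

definition angles :: "pt \<Rightarrow> pt \<Rightarrow> pt \<Rightarrow> real list" where
  "angles t1 t2 t3 = [ang t1 t2 t3, ang t2 t1 t3, ang t3 t1 t2]"

definition has_right_angle :: "pt \<Rightarrow> pt \<Rightarrow> pt \<Rightarrow> bool" where
  "has_right_angle t1 t2 t3 \<longleftrightarrow> pi / 2 \<in> set (angles t1 t2 t3)"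

definition type_120_30_30 :: "pt \<Rightarrow> pt \<Rightarrow> pt \<Rightarrow> bool" where
  "type_120_30_30 t1 t2 t3 \<longleftrightarrow> mset (angles t1 t2 t3) = {# 2 * pi / 3, pi / 6, pi / 6 #}"

definition eps_congruent_ord :: "pt \<Rightarrow> pt \<Rightarrow> pt \<Rightarrow> real \<Rightarrow> pt \<Rightarrow> pt \<Rightarrow> pt \<Rightarrow> bool" where
  "eps_congruent_ord t1 t2 t3 \<epsilon> a' b' c' \<longleftrightarrow>
     (let \<epsilon>' = \<epsilon> * Min {dist t1 t2, dist t2 t3, dist t1 t3} in
      \<exists>a b c. dist a b = dist t1 t2 \<and> dist b c = dist t2 t3 \<and> dist a c = dist t1 t3 \<and>
              dist a' a \<le> \<epsilon>' \<and> dist b' b \<le> \<epsilon>' \<and> dist c' c \<le> \<epsilon>')"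

definition tri_edges :: "pt \<Rightarrow> pt \<Rightarrow> pt \<Rightarrow> pt set \<Rightarrow> real \<Rightarrow> pt set set" where
  "tri_edges t1 t2 t3 P \<epsilon> =
     {e. e \<subseteq> P \<and> card e = 3 \<and>
         (\<exists>a' b' c'. e = {a', b', c'} \<and> eps_congruent_ord t1 t2 t3 \<epsilon> a' b' c')}"

definition contains_copy :: "'a set \<Rightarrow> 'a set set \<Rightarrow> 'b set \<Rightarrow> 'b set set \<Rightarrow> bool" where
  "contains_copy V E VF EF \<longleftrightarrow>
     (\<exists>f. inj_on f VF \<and> f ` VF \<subseteq> V \<and> (\<forall>e\<in>EF. f ` e \<in> E))"

definition forbidden :: "'b set \<Rightarrow> 'b set set \<Rightarrow> pt \<Rightarrow> pt \<Rightarrow> pt \<Rightarrow> bool" where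
  "forbidden VF EF t1 t2 t3 \<longleftrightarrow>
     (\<exists>\<epsilon>>0. \<forall>P::pt set. finite P \<and> card P = card VF \<longrightarrow>
        \<not> contains_copy P (tri_edges t1 t2 t3 P \<epsilon>) VF EF)"

definition K43minus_V :: "nat set" where "K43minus_V = {1, 2, 3, 4}"
definition K43minus_E :: "nat set set" where
  "K43minus_E = {{1, 2, 3}, {1, 2, 4}, {1, 3, 4}}"

end

theory Submission
  imports Defs
begin


definition gd :: "real \<Rightarrow> real \<Rightarrow> real \<Rightarrow> real \<Rightarrow> real \<Rightarrow> real \<Rightarrow> real" where
  "gd p1 p2 p3 q12 q13 q23 =
     p1* p2* p3 + 2*((p1+p2-q12)/2)*((p1+p3-q13)/2)*((p2+p3-q23)/2)
     - p1*((p2+p3-q23)/2)^2 - p2*((p1+p3-q13)/2)^2 - p3*((p1+p2-q12)/2)^2"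

definition perm3 :: "real \<Rightarrow> real \<Rightarrow> real \<Rightarrow> real \<Rightarrow> real \<Rightarrow> real \<Rightarrow> bool" where
  "perm3 a b c x y z \<longleftrightarrow> (x,y,z) \<in> {(a,b,c),(a,c,b),(b,a,c),(b,c,a),(c,a,b),(c,b,a)}"

lemma gd_F1: "gd p1 p2 p3 p3 p2 p1 = (p1+p2-p3)*(p1+p3-p2)*(p2+p3-p1)/2"
  unfolding gd_def by (simp add: field_simps power2_eq_square)
lemma gd_F2: "gd v v v w w w = w^2*(3* v-w)/4"
  unfolding gd_def by (simp add: field_simps power2_eq_square)
lemma gd_F3a: "gd v v w w v v = w^2*(2* v-w)/2"
  unfolding gd_def by (simp add: field_simps power2_eq_square)
lemma gd_F3b: "gd v w v v w v = w^2*(2* v-w)/2"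
  unfolding gd_def by (simp add: field_simps power2_eq_square)
lemma gd_F3c: "gd w v v v v w = w^2*(2* v-w)/2"
  unfolding gd_def by (simp add: field_simps power2_eq_square)

lemma exact:
  fixes A B C :: real
  assumes pos: "A>0" "B>0" "C>0"
    and nr: "A+B\<noteq>C" "A+C\<noteq>B" "B+C\<noteq>A"
    and n120: "\<not>(A=B\<and>C=3*A)" "\<not>(A=C\<and>B=3*A)" "\<not>(B=C\<and>A=3*B)"
    and e12: "perm3 A B C p1 p2 q12" and e13: "perm3 A B C p1 p3 q13" and e23: "perm3 A B C p2 p3 q23"
  shows "gd p1 p2 p3 q12 q13 q23 \<noteq> 0"
proof (cases "p1 = p2")
  case True
  show ?thesis
  proof (cases "p3 = p1")
    case True2: True
    have q: "q13 = q12" "q23 = q12" using e12 e13 e23 True True2 unfolding perm3_def by auto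
    have "q12 \<noteq> 0" "q12 \<noteq> 3* p1" using e12 True pos n120 unfolding perm3_def by auto
    then show ?thesis using True True2 q by (simp add: gd_F2)
  next
    case False
    have q: "p3 = q12" "q13 = p1" "q23 = p1" using e12 e13 e23 True False unfolding perm3_def by auto
    have "q12 \<noteq> 0" "q12 \<noteq> 2* p1" using e12 True pos nr unfolding perm3_def by auto
    then show ?thesis using True q by (simp add: gd_F3a)
  qed
next
  case False
  show ?thesis
  proof (cases "p1 = p3")
    case True
    have q: "p2 = q13" "q12 = p1" "q23 = p1" using e12 e13 e23 True False unfolding perm3_def by auto
    have "q13 \<noteq> 0" "q13 \<noteq> 2* p1" using e13 True pos nr unfolding perm3_def by auto
    then show ?thesis using True q by (simp add: gd_F3b)
  next
    case False2: False
    show ?thesis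
    proof (cases "p2 = p3")
      case True
      have q: "p1 = q23" "q12 = p2" "q13 = p2" using e12 e13 e23 True False unfolding perm3_def by auto
      have "q23 \<noteq> 0" "q23 \<noteq> 2* p2" using e23 True pos nr unfolding perm3_def by auto
      then show ?thesis using True q by (simp add: gd_F3c)
    next
      case False3: False
      have q: "q12 = p3" "q13 = p2" "q23 = p1" using e12 e13 e23 False False2 False3 unfolding perm3_def by auto
      have "perm3 A B C p1 p2 p3" using e12 q by simp
      hence "p1+p2-p3 \<noteq> 0" "p1+p3-p2 \<noteq> 0" "p2+p3-p1 \<noteq> 0" using nr unfolding perm3_def by auto
      then show ?thesis using q by (simp add: gd_F1)
    qed
  qed
qed

lemma dist_sq2: "(dist (x::real^2) y)^2 = (x$1 - y$1)^2 + (x$2 - y$2)^2"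
proof -
  have "(dist x y)^2 = inner (x-y) (x-y)" by (simp add: dist_norm power2_norm_eq_inner)
  also have "\<dots> = (x$1 - y$1)^2 + (x$2 - y$2)^2"
    by (simp add: inner_vec_def sum_2 power2_eq_square)
  finally show ?thesis .
qed

lemma gram_zero:
  fixes x y1 y2 y3 :: "real^2"
  shows "gd ((dist x y1)^2) ((dist x y2)^2) ((dist x y3)^2) ((dist y1 y2)^2) ((dist y1 y3)^2) ((dist y2 y3)^2) = 0"
  unfolding dist_sq2 gd_def by algebra



lemma ang_cos: "ang p q r = arccos (((dist p q)^2 + (dist p r)^2 - (dist q r)^2) / (2 * dist p q * dist p r))"
proof -
  have "(q - p) \<bullet> (r - p) = ((norm (q-p))^2 + (norm (r-p))^2 - (norm ((q-p)-(r-p)))^2)/2"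
    by (rule dot_norm_neg)
  also have "(q-p)-(r-p) = q - r" by simp
  finally have e: "(q - p) \<bullet> (r - p) = ((dist p q)^2 + (dist p r)^2 - (dist q r)^2)/2"
    by (simp add: dist_norm norm_minus_commute)
  have n: "norm (q-p) = dist p q" "norm (r - p) = dist p r" by (simp_all add: dist_norm norm_minus_commute)
  show ?thesis unfolding ang_def e n by (simp add: divide_divide_eq_left mult.assoc)
qed

lemma acos_30: "arccos (sqrt 3 / 2) = pi/6"
  using arccos_cos[of "pi/6"] cos_30 by simp
lemma acos_120: "arccos (-1/2) = 2*pi/3"
  using arccos_cos[of "2*pi/3"] cos_120 by simp

lemma iso_vals:
  fixes x y :: real
  assumes "x > 0" "y = sqrt 3 * x"
  shows "arccos ((x^2 + y^2 - x^2)/(2*x*y)) = pi/6"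
    "arccos ((y^2 + x^2 - x^2)/(2*y*x)) = pi/6"
    "arccos ((x^2 + x^2 - y^2)/(2*x*x)) = 2*pi/3"
proof -
  have s3: "(sqrt 3)^2 = 3" by simp
  have "(x^2 + y^2 - x^2)/(2*x*y) = sqrt 3 / 2"
    using assms by (simp add: field_simps power2_eq_square)
  then show "arccos ((x^2 + y^2 - x^2)/(2*x*y)) = pi/6" by (simp only: acos_30)
  have "(y^2 + x^2 - x^2)/(2*y*x) = sqrt 3 / 2"
    using assms by (simp add: field_simps power2_eq_square)
  then show "arccos ((y^2 + x^2 - x^2)/(2*y*x)) = pi/6" by (simp only: acos_30)
  have "(x^2 + x^2 - y^2)/(2*x*x) = -1/2"
    using assms by (simp add: field_simps power2_eq_square power_mult_distrib)
  then show "arccos ((x^2 + x^2 - y^2)/(2*x*x)) = 2*pi/3" by (simp only: acos_120)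
qed

lemma sqrt3_of: "(y::real) \<ge> 0 \<Longrightarrow> x \<ge> 0 \<Longrightarrow> y^2 = 3 * x^2 \<Longrightarrow> y = sqrt 3 * x"
  by (metis real_sqrt_abs real_sqrt_mult abs_of_nonneg)

lemma tri_facts:
  fixes t1 t2 t3 :: pt
  defines "a \<equiv> dist t1 t2" and "b \<equiv> dist t2 t3" and "c \<equiv> dist t1 t3"
  assumes "is_triangle t1 t2 t3"
    and "\<not> has_right_angle t1 t2 t3"
    and "\<not> type_120_30_30 t1 t2 t3"
  shows "a > 0" "b > 0" "c > 0"
    "a^2+b^2 \<noteq> c^2" "a^2+c^2 \<noteq> b^2" "b^2+c^2 \<noteq> a^2"
    "\<not>(a^2=b^2 \<and> c^2=3*a^2)" "\<not>(a^2=c^2 \<and> b^2=3*a^2)" "\<not>(b^2=c^2 \<and> a^2=3*b^2)"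
proof -
  have d: "t1 \<noteq> t2" "t2 \<noteq> t3" "t1 \<noteq> t3" using assms(4) unfolding is_triangle_def
    by (auto simp: insert_commute)
  then show pa: "a > 0" and pb: "b > 0" and pc: "c > 0" by (simp_all add: a_def b_def c_def)
  have A1: "ang t1 t2 t3 = arccos ((a^2 + c^2 - b^2)/(2*a*c))"
    by (simp add: ang_cos a_def b_def c_def)
  have A2: "ang t2 t1 t3 = arccos ((a^2 + b^2 - c^2)/(2*a*b))"
    by (simp add: ang_cos a_def b_def c_def dist_commute)
  have A3: "ang t3 t1 t2 = arccos ((c^2 + b^2 - a^2)/(2*c*b))"
    by (simp add: ang_cos a_def b_def c_def dist_commute)
  have L: "angles t1 t2 t3 = [arccos ((a^2 + c^2 - b^2)/(2*a*c)), arccos ((a^2 + b^2 - c^2)/(2*a*b)),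
      arccos ((c^2 + b^2 - a^2)/(2*c*b))]" unfolding angles_def A1 A2 A3 ..
  have nr: "pi/2 \<notin> set (angles t1 t2 t3)" using assms(5) unfolding has_right_angle_def .
  show "a^2+b^2 \<noteq> c^2" using nr unfolding L by auto
  show "a^2+c^2 \<noteq> b^2" using nr unfolding L by auto
  show "b^2+c^2 \<noteq> a^2" using nr unfolding L by (auto simp: add.commute)
  have n1: "mset (angles t1 t2 t3) \<noteq> {# 2 * pi / 3, pi / 6, pi / 6 #}" using assms(6) unfolding type_120_30_30_def .
  show "\<not>(a^2=b^2 \<and> c^2=3*a^2)"
  proof
    assume h: "a^2=b^2 \<and> c^2=3*a^2"
    have ab: "b = a" using h pa pb by (metis power2_eq_iff_nonneg less_imp_le)
    have c: "c = sqrt 3 * a" using sqrt3_of h pa pc by auto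
    have "angles t1 t2 t3 = [pi/6, 2*pi/3, pi/6]" unfolding L ab using iso_vals[OF pa c] by simp
    then show False using n1 by (simp add: add_mset_commute)
  qed
  show "\<not>(a^2=c^2 \<and> b^2=3*a^2)"
  proof
    assume h: "a^2=c^2 \<and> b^2=3*a^2"
    have ab: "c = a" using h pa pc by (metis power2_eq_iff_nonneg less_imp_le)
    have c: "b = sqrt 3 * a" using sqrt3_of h pa pb by auto
    have "angles t1 t2 t3 = [2*pi/3, pi/6, pi/6]" unfolding L ab using iso_vals[OF pa c] by simp
    then show False using n1 by (simp add: add_mset_commute)
  qed
  show "\<not>(b^2=c^2 \<and> a^2=3*b^2)"
  proof
    assume h: "b^2=c^2 \<and> a^2=3*b^2"
    have ab: "c = b" using h pb pc by (metis power2_eq_iff_nonneg less_imp_le)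
    have c: "a = sqrt 3 * b" using sqrt3_of h pa pb by auto
    have "angles t1 t2 t3 = [pi/6, pi/6, 2*pi/3]" unfolding L ab using iso_vals[OF pb c] by simp
    then show False using n1 by (simp add: add_mset_commute)
  qed
qed



definition Phi :: "real \<times> real \<times> real \<times> real \<times> real \<times> real \<Rightarrow> real" where
  "Phi s = gd ((fst s)^2) ((fst (snd s))^2) ((fst (snd (snd s)))^2) ((fst (snd (snd (snd s))))^2)
     ((fst (snd (snd (snd (snd s)))))^2) ((snd (snd (snd (snd (snd s)))))^2)"

lemma Phi_simp: "Phi (x1,x2,x3,x4,x5,x6) = gd (x1^2) (x2^2) (x3^2) (x4^2) (x5^2) (x6^2)"
  by (simp add: Phi_def)

lemma cPhi: "continuous_on UNIV Phi"
  unfolding Phi_def gd_def by (intro continuous_intros) auto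

lemma isCont_Phi: "isCont Phi s0"
  using cPhi continuous_on_eq_continuous_at open_UNIV by blast

lemma dist_pair_le: "dist (a,b) (c,d) \<le> dist a c + dist b d"
proof -
  have "dist (a,b) (c,d) = sqrt ((dist a c)^2 + (dist b d)^2)" by (simp add: dist_Pair_Pair)
  also have "\<dots> \<le> \<bar>dist a c\<bar> + \<bar>dist b d\<bar>" by (rule sqrt_sum_squares_le_sum_abs)
  finally show ?thesis by simp
qed

lemma dist6_le:
  fixes x1 x2 x3 x4 x5 x6 y1 y2 y3 y4 y5 y6 :: real
  shows "dist (x1,x2,x3,x4,x5,x6) (y1,y2,y3,y4,y5,y6) \<le>
    \<bar>x1-y1\<bar> + \<bar>x2-y2\<bar> + \<bar>x3-y3\<bar> + \<bar>x4-y4\<bar> + \<bar>x5-y5\<bar> + \<bar>x6-y6\<bar>"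
proof -
  have "dist (x1,x2,x3,x4,x5,x6) (y1,y2,y3,y4,y5,y6) \<le> dist x1 y1 + dist (x2,x3,x4,x5,x6) (y2,y3,y4,y5,y6)"
    by (rule dist_pair_le)
  also have "dist (x2,x3,x4,x5,x6) (y2,y3,y4,y5,y6) \<le> dist x2 y2 + dist (x3,x4,x5,x6) (y3,y4,y5,y6)"
    by (rule dist_pair_le)
  also have "dist (x3,x4,x5,x6) (y3,y4,y5,y6) \<le> dist x3 y3 + dist (x4,x5,x6) (y4,y5,y6)"
    by (rule dist_pair_le)
  also have "dist (x4,x5,x6) (y4,y5,y6) \<le> dist x4 y4 + dist (x5,x6) (y5,y6)"
    by (rule dist_pair_le)
  also have "dist (x5,x6) (y5,y6) \<le> dist x5 y5 + dist x6 y6"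
    by (rule dist_pair_le)
  finally show ?thesis by (simp add: dist_real_def add.assoc)
qed

definition Qd :: "real \<Rightarrow> real \<times> real \<times> real \<times> real \<times> real \<times> real \<Rightarrow> bool" where
  "Qd d s0 \<longleftrightarrow> (\<forall>x1 x2 x3 x4 x5 x6. case s0 of (c1,c2,c3,c4,c5,c6) \<Rightarrow>
      (\<bar>x1-c1\<bar> \<le> d \<and> \<bar>x2-c2\<bar> \<le> d \<and> \<bar>x3-c3\<bar> \<le> d \<and> \<bar>x4-c4\<bar> \<le> d \<and> \<bar>x5-c5\<bar> \<le> d \<and> \<bar>x6-c6\<bar> \<le> d)
      \<longrightarrow> Phi (x1,x2,x3,x4,x5,x6) \<noteq> 0)"

lemma Qd_exists:
  assumes "Phi s0 \<noteq> 0" shows "\<exists>d>0. Qd d s0"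
proof -
  obtain c1 c2 c3 c4 c5 c6 where s0: "s0 = (c1,c2,c3,c4,c5,c6)" by (cases s0) auto
  from isCont_Phi[of s0] have ed: "\<forall>e>0. \<exists>d>0. \<forall>x'. dist x' s0 < d \<longrightarrow> dist (Phi x') (Phi s0) < e"
    unfolding continuous_at_eps_delta .
  have pos: "\<bar>Phi s0\<bar> > 0" using assms by simp
  obtain d where d0: "d > 0" and d: "\<And>x'. dist x' s0 < d \<Longrightarrow> dist (Phi x') (Phi s0) < \<bar>Phi s0\<bar>"
    using ed pos by blast
  have "Qd (d/7) s0" unfolding Qd_def s0 prod.case
  proof (intro allI impI)
    fix x1 x2 x3 x4 x5 x6 :: real
    assume h: "\<bar>x1-c1\<bar> \<le> d/7 \<and> \<bar>x2-c2\<bar> \<le> d/7 \<and> \<bar>x3-c3\<bar> \<le> d/7 \<and> \<bar>x4-c4\<bar> \<le> d/7 \<and> \<bar>x5-c5\<bar> \<le> d/7 \<and> \<bar>x6-c6\<bar> \<le> d/7"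
    have le: "dist (x1,x2,x3,x4,x5,x6) (c1,c2,c3,c4,c5,c6) \<le>
      \<bar>x1-c1\<bar> + \<bar>x2-c2\<bar> + \<bar>x3-c3\<bar> + \<bar>x4-c4\<bar> + \<bar>x5-c5\<bar> + \<bar>x6-c6\<bar>"
      by (rule dist6_le)
    have "dist (x1,x2,x3,x4,x5,x6) s0 < d" unfolding s0
      using le h d0 by linarith
    then have lt: "dist (Phi (x1,x2,x3,x4,x5,x6)) (Phi s0) < \<bar>Phi s0\<bar>" by (rule d)
    show "Phi (x1,x2,x3,x4,x5,x6) \<noteq> 0"
    proof
      assume "Phi (x1,x2,x3,x4,x5,x6) = 0"
      then show False using lt by (simp add: dist_real_def)
    qed
  qed
  then show ?thesis using d0 by (intro exI[of _ "d/7"]) simp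
qed

lemma Qd_mono: "Qd d s \<Longrightarrow> 0 < d' \<Longrightarrow> d' \<le> d \<Longrightarrow> Qd d' s"
  unfolding Qd_def by (cases s) force

lemma finite_delta:
  fixes Q :: "real \<Rightarrow> 'a \<Rightarrow> bool"
  assumes "finite S" "\<forall>s\<in>S. \<exists>d>0. Q d s" "\<forall>s d d'. Q d s \<longrightarrow> 0<d' \<longrightarrow> d' \<le> d \<longrightarrow> Q d' s"
  shows "\<exists>d>0. \<forall>s\<in>S. Q d s"
  using assms(1,2)
proof (induction S rule: finite_induct)
  case empty
  then show ?case using zero_less_one by blast
next
  case (insert x F)
  then obtain d1 where d1: "d1 > 0" "\<forall>s\<in>F. Q d1 s" by auto
  obtain d2 where d2: "d2 > 0" "Q d2 x" using insert.prems by auto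
  show ?case
  proof (intro exI[of _ "min d1 d2"] conjI ballI)
    show "min d1 d2 > 0" using d1 d2 by simp
    fix s assume "s \<in> insert x F"
    then show "Q (min d1 d2) s" using d1 d2 assms(3) by (metis insertE min.cobounded1 min.cobounded2 \<open>min d1 d2 > 0\<close>)
  qed
qed

lemma perm3_sq: "perm3 a b c x y z \<Longrightarrow> perm3 (a^2) (b^2) (c^2) (x^2) (y^2) (z^2)"
  unfolding perm3_def by auto

lemma perm3_mem: "perm3 a b c x y z \<Longrightarrow> x \<in> {a,b,c} \<and> y \<in> {a,b,c} \<and> z \<in> {a,b,c}"
  unfolding perm3_def by auto

lemma dist_dev: "\<bar>dist u v - dist u0 v0\<bar> \<le> dist u u0 + dist v v0"
proof -
  have "dist u v \<le> dist u u0 + dist u0 v" "dist u0 v \<le> dist u0 v0 + dist v0 v"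
    "dist u0 v0 \<le> dist u0 u + dist u v0" "dist u v0 \<le> dist u v + dist v v0" by (rule dist_triangle)+
  then show ?thesis by (simp add: dist_commute abs_le_iff)
qed

lemma perm_sets:
  assumes "x\<noteq>y" "x\<noteq>z" "y\<noteq>z" "{x,y,z} = {a,b,c}"
  shows "(a=x\<and>b=y\<and>c=z) \<or> (a=x\<and>b=z\<and>c=y) \<or> (a=y\<and>b=x\<and>c=z) \<or> (a=y\<and>b=z\<and>c=x) \<or> (a=z\<and>b=x\<and>c=y) \<or> (a=z\<and>b=y\<and>c=x)"
proof -
  have m: "a=x \<or> a=y \<or> a=z" "b=x \<or> b=y \<or> b=z" "c=x \<or> c=y \<or> c=z" "x=a \<or> x=b \<or> x=c" "y=a \<or> y=b \<or> y=c" "z=a \<or> z=b \<or> z=c"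
    using assms(4) by (metis insertCI insertE empty_iff)+
  show ?thesis using m assms(1-3) by (smt (verit))
qed

lemma edge_approx:
  fixes t1 t2 t3 x y z :: pt
  assumes "{x,y,z} \<in> tri_edges t1 t2 t3 P \<epsilon>" "x\<noteq>y" "x\<noteq>z" "y\<noteq>z"
  defines "M \<equiv> Min {dist t1 t2, dist t2 t3, dist t1 t3}"
  shows "\<exists>\<alpha> \<beta> \<gamma>. perm3 (dist t1 t2) (dist t2 t3) (dist t1 t3) \<alpha> \<beta> \<gamma> \<and> \<bar>dist x y - \<alpha>\<bar> \<le> 2*\<epsilon>*M
     \<and> \<bar>dist x z - \<beta>\<bar> \<le> 2*\<epsilon>*M \<and> \<bar>dist y z - \<gamma>\<bar> \<le> 2*\<epsilon>*M"
proof -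
  obtain a' b' c' where e: "{x,y,z} = {a',b',c'}" and ec: "eps_congruent_ord t1 t2 t3 \<epsilon> a' b' c'"
    using assms(1) unfolding tri_edges_def by blast
  obtain a0 b0 c0 where h: "dist a0 b0 = dist t1 t2" "dist b0 c0 = dist t2 t3" "dist a0 c0 = dist t1 t3"
    "dist a' a0 \<le> \<epsilon>*M" "dist b' b0 \<le> \<epsilon>*M" "dist c' c0 \<le> \<epsilon>*M"
    using ec unfolding eps_congruent_ord_def Let_def M_def by blast
  have k1: "\<bar>dist a' b' - dist t1 t2\<bar> \<le> 2*\<epsilon>*M" using dist_dev[of a' b' a0 b0] h by linarith
  have k2: "\<bar>dist b' c' - dist t2 t3\<bar> \<le> 2*\<epsilon>*M" using dist_dev[of b' c' b0 c0] h by linarith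
  have k3: "\<bar>dist a' c' - dist t1 t3\<bar> \<le> 2*\<epsilon>*M" using dist_dev[of a' c' a0 c0] h by linarith
  have "(a'=x\<and>b'=y\<and>c'=z) \<or> (a'=x\<and>b'=z\<and>c'=y) \<or> (a'=y\<and>b'=x\<and>c'=z) \<or> (a'=y\<and>b'=z\<and>c'=x) \<or> (a'=z\<and>b'=x\<and>c'=y) \<or> (a'=z\<and>b'=y\<and>c'=x)"
    using perm_sets[OF assms(2-4) e] .
  then show ?thesis
  proof (elim disjE)
    assume "a'=x\<and>b'=y\<and>c'=z"
    then have "perm3 (dist t1 t2) (dist t2 t3) (dist t1 t3) (dist t1 t2) (dist t1 t3) (dist t2 t3) \<and> \<bar>dist x y - dist t1 t2\<bar> \<le> 2*\<epsilon>*M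
     \<and> \<bar>dist x z - dist t1 t3\<bar> \<le> 2*\<epsilon>*M \<and> \<bar>dist y z - dist t2 t3\<bar> \<le> 2*\<epsilon>*M"
      using k1 k2 k3 by (auto simp: perm3_def dist_commute)
    then show ?thesis by blast
  next
    assume "a'=x\<and>b'=z\<and>c'=y"
    then have "perm3 (dist t1 t2) (dist t2 t3) (dist t1 t3) (dist t1 t3) (dist t1 t2) (dist t2 t3) \<and> \<bar>dist x y - dist t1 t3\<bar> \<le> 2*\<epsilon>*M
     \<and> \<bar>dist x z - dist t1 t2\<bar> \<le> 2*\<epsilon>*M \<and> \<bar>dist y z - dist t2 t3\<bar> \<le> 2*\<epsilon>*M"
      using k1 k2 k3 by (auto simp: perm3_def dist_commute)
    then show ?thesis by blast
  next
    assume "a'=y\<and>b'=x\<and>c'=z"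
    then have "perm3 (dist t1 t2) (dist t2 t3) (dist t1 t3) (dist t1 t2) (dist t2 t3) (dist t1 t3) \<and> \<bar>dist x y - dist t1 t2\<bar> \<le> 2*\<epsilon>*M
     \<and> \<bar>dist x z - dist t2 t3\<bar> \<le> 2*\<epsilon>*M \<and> \<bar>dist y z - dist t1 t3\<bar> \<le> 2*\<epsilon>*M"
      using k1 k2 k3 by (auto simp: perm3_def dist_commute)
    then show ?thesis by blast
  next
    assume "a'=y\<and>b'=z\<and>c'=x"
    then have "perm3 (dist t1 t2) (dist t2 t3) (dist t1 t3) (dist t1 t3) (dist t2 t3) (dist t1 t2) \<and> \<bar>dist x y - dist t1 t3\<bar> \<le> 2*\<epsilon>*M
     \<and> \<bar>dist x z - dist t2 t3\<bar> \<le> 2*\<epsilon>*M \<and> \<bar>dist y z - dist t1 t2\<bar> \<le> 2*\<epsilon>*M"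
      using k1 k2 k3 by (auto simp: perm3_def dist_commute)
    then show ?thesis by blast
  next
    assume "a'=z\<and>b'=x\<and>c'=y"
    then have "perm3 (dist t1 t2) (dist t2 t3) (dist t1 t3) (dist t2 t3) (dist t1 t2) (dist t1 t3) \<and> \<bar>dist x y - dist t2 t3\<bar> \<le> 2*\<epsilon>*M
     \<and> \<bar>dist x z - dist t1 t2\<bar> \<le> 2*\<epsilon>*M \<and> \<bar>dist y z - dist t1 t3\<bar> \<le> 2*\<epsilon>*M"
      using k1 k2 k3 by (auto simp: perm3_def dist_commute)
    then show ?thesis by blast
  next
    assume "a'=z\<and>b'=y\<and>c'=x"
    then have "perm3 (dist t1 t2) (dist t2 t3) (dist t1 t3) (dist t2 t3) (dist t1 t3) (dist t1 t2) \<and> \<bar>dist x y - dist t2 t3\<bar> \<le> 2*\<epsilon>*M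
     \<and> \<bar>dist x z - dist t1 t3\<bar> \<le> 2*\<epsilon>*M \<and> \<bar>dist y z - dist t1 t2\<bar> \<le> 2*\<epsilon>*M"
      using k1 k2 k3 by (auto simp: perm3_def dist_commute)
    then show ?thesis by blast
  qed
qed



theorem lemma2p9:
  fixes t1 t2 t3 :: pt
  assumes "is_triangle t1 t2 t3"
    and "\<not> has_right_angle t1 t2 t3"
    and "\<not> type_120_30_30 t1 t2 t3"
  shows "forbidden K43minus_V K43minus_E t1 t2 t3"
proof -
  define a where "a = dist t1 t2"
  define b where "b = dist t2 t3"
  define c where "c = dist t1 t3"
  note tf = tri_facts[OF assms, folded a_def b_def c_def]
  define M where "M = Min {dist t1 t2, dist t2 t3, dist t1 t3}"
  have M0: "M > 0" unfolding M_def using tf(1-3) by (simp add: a_def b_def c_def)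
  define S0 where "S0 = {s. case s of (c1,c2,c3,c4,c5,c6) \<Rightarrow>
      perm3 a b c c1 c2 c4 \<and> perm3 a b c c1 c3 c5 \<and> perm3 a b c c2 c3 c6}"
  have S0sub: "S0 \<subseteq> {a,b,c} \<times> {a,b,c} \<times> {a,b,c} \<times> {a,b,c} \<times> {a,b,c} \<times> {a,b,c}"
  proof
    fix s assume "s \<in> S0"
    moreover obtain c1 c2 c3 c4 c5 c6 where s: "s = (c1,c2,c3,c4,c5,c6)" by (cases s) auto
    ultimately have p: "perm3 a b c c1 c2 c4" "perm3 a b c c1 c3 c5" "perm3 a b c c2 c3 c6"
      unfolding S0_def by auto
    show "s \<in> {a,b,c} \<times> {a,b,c} \<times> {a,b,c} \<times> {a,b,c} \<times> {a,b,c} \<times> {a,b,c}"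
      unfolding s using perm3_mem[OF p(1)] perm3_mem[OF p(2)] perm3_mem[OF p(3)]
      by (intro SigmaI) blast+
  qed
  have finS0: "finite S0" by (rule finite_subset[OF S0sub]) simp
  have Phi_nz: "Phi s0 \<noteq> 0" if "s0 \<in> S0" for s0
  proof -
    obtain c1 c2 c3 c4 c5 c6 where s0: "s0 = (c1,c2,c3,c4,c5,c6)" by (cases s0) auto
    have p: "perm3 a b c c1 c2 c4" "perm3 a b c c1 c3 c5" "perm3 a b c c2 c3 c6"
      using that unfolding S0_def s0 by auto
    have pos: "a^2 > 0" "b^2 > 0" "c^2 > 0" using tf(1-3) by simp_all
    show ?thesis unfolding s0 Phi_simp
      by (rule exact[OF pos tf(4-9) perm3_sq[OF p(1)] perm3_sq[OF p(2)] perm3_sq[OF p(3)]])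
  qed
  obtain \<delta> where \<delta>: "\<delta> > 0" "\<forall>s\<in>S0. Qd \<delta> s"
    using finite_delta[OF finS0, of Qd] Qd_exists Phi_nz Qd_mono by blast
  define V where "V = {a,b,c}"
  have finV: "finite (V \<times> V)" unfolding V_def by simp
  obtain g where g: "g > 0" "\<forall>p\<in>V \<times> V. (fst p \<noteq> snd p \<longrightarrow> 2*g < \<bar>fst p - snd p\<bar>)"
  proof -
    have "\<exists>d>0. \<forall>p\<in>V \<times> V. (\<lambda>d p. fst p \<noteq> snd p \<longrightarrow> 2*d < \<bar>fst p - snd p\<bar>) d p"
    proof (rule finite_delta[OF finV])
      show "\<forall>p\<in>V \<times> V. \<exists>d>0. fst p \<noteq> snd p \<longrightarrow> 2*d < \<bar>fst p - snd p\<bar>"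
      proof
        fix p :: "real \<times> real"
        show "\<exists>d>0. fst p \<noteq> snd p \<longrightarrow> 2*d < \<bar>fst p - snd p\<bar>"
        proof (cases "fst p = snd p")
          case True then show ?thesis using zero_less_one by blast
        next
          case False
          then show ?thesis by (intro exI[of _ "\<bar>fst p - snd p\<bar>/4"]) auto
        qed
      qed
      show "\<forall>(s::real\<times>real) (d::real) d'. (fst s \<noteq> snd s \<longrightarrow> 2*d < \<bar>fst s - snd s\<bar>) \<longrightarrow> 0 < d' \<longrightarrow> d' \<le> d \<longrightarrow>
          (fst s \<noteq> snd s \<longrightarrow> 2*d' < \<bar>fst s - snd s\<bar>)" by auto
    qed
    then show ?thesis using that by auto
  qed
  have gap: "v = w" if "v \<in> V" "w \<in> V" "\<bar>r - v\<bar> \<le> min \<delta> g" "\<bar>r - w\<bar> \<le> min \<delta> g" for r v w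
  proof (rule ccontr)
    assume "v \<noteq> w"
    then have "2*g < \<bar>v - w\<bar>" using g(2) that(1,2) by force
    moreover have "\<bar>v - w\<bar> \<le> 2 * min \<delta> g" using that(3,4) by linarith
    ultimately show False by linarith
  qed
  define \<epsilon> where "\<epsilon> = min \<delta> g / (2*M)"
  have \<epsilon>0: "\<epsilon> > 0" unfolding \<epsilon>_def using \<delta> g M0 by simp
  have \<eta>: "2*\<epsilon>*M = min \<delta> g" unfolding \<epsilon>_def using M0 by simp
  show ?thesis unfolding forbidden_def
  proof (intro exI[of _ \<epsilon>] conjI allI impI notI)
    show "\<epsilon> > 0" by (rule \<epsilon>0)
    fix P :: "pt set"
    assume "finite P \<and> card P = card K43minus_V"
    assume "contains_copy P (tri_edges t1 t2 t3 P \<epsilon>) K43minus_V K43minus_E"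
    then obtain f where f: "inj_on f K43minus_V" "\<forall>e\<in>K43minus_E. f ` e \<in> tri_edges t1 t2 t3 P \<epsilon>"
      unfolding contains_copy_def by blast
    define x where "x = f 1"
    define y1 where "y1 = f 2"
    define y2 where "y2 = f 3"
    define y3 where "y3 = f 4"
    have dis: "x \<noteq> y1" "x \<noteq> y2" "x \<noteq> y3" "y1 \<noteq> y2" "y1 \<noteq> y3" "y2 \<noteq> y3"
      using f(1) unfolding x_def y1_def y2_def y3_def K43minus_V_def inj_on_def by auto
    have E1: "{x,y1,y2} \<in> tri_edges t1 t2 t3 P \<epsilon>"
      using f(2) unfolding K43minus_E_def x_def y1_def y2_def by auto
    have E2: "{x,y1,y3} \<in> tri_edges t1 t2 t3 P \<epsilon>"
      using f(2) unfolding K43minus_E_def x_def y1_def y3_def by auto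
    have E3: "{x,y2,y3} \<in> tri_edges t1 t2 t3 P \<epsilon>"
      using f(2) unfolding K43minus_E_def x_def y2_def y3_def by auto
    obtain \<alpha>1 \<beta>1 \<gamma>1 where A1: "perm3 a b c \<alpha>1 \<beta>1 \<gamma>1" "\<bar>dist x y1 - \<alpha>1\<bar> \<le> min \<delta> g"
      "\<bar>dist x y2 - \<beta>1\<bar> \<le> min \<delta> g" "\<bar>dist y1 y2 - \<gamma>1\<bar> \<le> min \<delta> g"
      using edge_approx[OF E1 dis(1,2,4)] unfolding \<eta>[unfolded M_def] a_def b_def c_def by blast
    obtain \<alpha>2 \<beta>2 \<gamma>2 where A2: "perm3 a b c \<alpha>2 \<beta>2 \<gamma>2" "\<bar>dist x y1 - \<alpha>2\<bar> \<le> min \<delta> g"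
      "\<bar>dist x y3 - \<beta>2\<bar> \<le> min \<delta> g" "\<bar>dist y1 y3 - \<gamma>2\<bar> \<le> min \<delta> g"
      using edge_approx[OF E2 dis(1,3,5)] unfolding \<eta>[unfolded M_def] a_def b_def c_def by blast
    obtain \<alpha>3 \<beta>3 \<gamma>3 where A3: "perm3 a b c \<alpha>3 \<beta>3 \<gamma>3" "\<bar>dist x y2 - \<alpha>3\<bar> \<le> min \<delta> g"
      "\<bar>dist x y3 - \<beta>3\<bar> \<le> min \<delta> g" "\<bar>dist y2 y3 - \<gamma>3\<bar> \<le> min \<delta> g"
      using edge_approx[OF E3 dis(2,3,6)] unfolding \<eta>[unfolded M_def] a_def b_def c_def by blast
    have e1: "\<alpha>2 = \<alpha>1" using gap[OF _ _ A2(2) A1(2)] perm3_mem[OF A1(1)] perm3_mem[OF A2(1)]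
      unfolding V_def by blast
    have e2: "\<alpha>3 = \<beta>1" using gap[OF _ _ A3(2) A1(3)] perm3_mem[OF A1(1)] perm3_mem[OF A3(1)]
      unfolding V_def by blast
    have e3: "\<beta>3 = \<beta>2" using gap[OF _ _ A3(3) A2(3)] perm3_mem[OF A2(1)] perm3_mem[OF A3(1)]
      unfolding V_def by blast
    have inS0: "(\<alpha>1, \<beta>1, \<beta>2, \<gamma>1, \<gamma>2, \<gamma>3) \<in> S0"
      unfolding S0_def using A1(1) A2(1) A3(1) e1 e2 e3 by auto
    have "Qd \<delta> (\<alpha>1, \<beta>1, \<beta>2, \<gamma>1, \<gamma>2, \<gamma>3)" using \<delta>(2) inS0 by blast
    then have "Phi (dist x y1, dist x y2, dist x y3, dist y1 y2, dist y1 y3, dist y2 y3) \<noteq> 0"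
      unfolding Qd_def using A1 A2 A3 e1 e2 e3 by auto
    then show False using gram_zero[of x y1 y2 y3] by (simp add: Phi_simp)
  qed
qed

end
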